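(* Let $(\gamma_i)_{i\in\omega}$ be modal formulas such that $\gamma_{i_2}\in\mathsf{K}+\gamma_{i_1}$ whenever $i_2<i_1$. Suppose that for every $l$ there is $n$ such that for every $k$ there is an inverse system $(\mathfrak{F}_i)_{i\in\omega}$ of finite Kripke frames with: (L1) $\mathfrak{F}_i\models\gamma_k$ for all $i$; (L2) $\varprojlim\mathfrak{F}_i\models\gamma_l$; (L3) $\varprojlim\mathfrak{F}_i\not\models\gamma_n$. Then for every set $\Sigma$ of modal formulas with $\mathsf{K}+\Sigma=\mathsf{K}+\{\gamma_n\mid n\in\omega\}$, infinitely many formulas of $\Sigma$ are not canonical.
   Context: $\mathsf{K}+\Sigma$ is the least normal modal logic containing $\Sigma$. A modal formula $\phi$ is canonical if it is valid in the canonical Kripke frame of the logic $\mathsf{K}+\phi$. An inverse system of Kripke frames indexed by $(\omega,\le)$ consists of frames $\mathfrak{F}_i=(W_i,(R_{i,\lambda}))$ and frame homomorphisms (bounded morphisms / p-morphisms) $f_{ij}:\mathfrak{F}_i\to\mathfrak{F}_j$ for $i\ge j$ with $f_{ii}=\mathrm{id}$ and $f_{jk}\circ f_{ij}=f_{ik}$ for $k\le j\le i$. Its inverse limit $\varprojlim\mathfrak{F}_i$ has carrier $\{x\in\prod_i W_i: f_{ij}(x_i)=x_j \text{ for all } i\ge j\}$ and $xR_\lambda y$ iff $x_iR_{i,\lambda}y_i$ for all $i$. *)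

theory Defs
  imports Main
begin

datatype 'm fm = Var nat | Bot | Imp "'m fm" "'m fm" | Box 'm "'m fm"

primrec subst :: "(nat \<Rightarrow> 'm fm) \<Rightarrow> 'm fm \<Rightarrow> 'm fm" where
  "subst \<sigma> (Var n) = \<sigma> n"
| "subst \<sigma> Bot = Bot"
| "subst \<sigma> (Imp p q) = Imp (subst \<sigma> p) (subst \<sigma> q)"
| "subst \<sigma> (Box a p) = Box a (subst \<sigma> p)"

inductive_set KL :: "'m fm set \<Rightarrow> 'm fm set" for \<Sigma> :: "'m fm set" where
  hyp: "\<phi> \<in> \<Sigma> \<Longrightarrow> \<phi> \<in> KL \<Sigma>"
| ax1: "Imp p (Imp q p) \<in> KL \<Sigma>"
| ax2: "Imp (Imp p (Imp q r)) (Imp (Imp p q) (Imp p r)) \<in> KL \<Sigma>"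
| ax3: "Imp (Imp (Imp p Bot) Bot) p \<in> KL \<Sigma>"
| axK: "Imp (Box a (Imp p q)) (Imp (Box a p) (Box a q)) \<in> KL \<Sigma>"
| mp: "Imp p q \<in> KL \<Sigma> \<Longrightarrow> p \<in> KL \<Sigma> \<Longrightarrow> q \<in> KL \<Sigma>"
| nec: "p \<in> KL \<Sigma> \<Longrightarrow> Box a p \<in> KL \<Sigma>"
| sub: "p \<in> KL \<Sigma> \<Longrightarrow> subst \<sigma> p \<in> KL \<Sigma>"

type_synonym ('w, 'm) frame = "'w set \<times> ('m \<Rightarrow> 'w \<Rightarrow> 'w \<Rightarrow> bool)"

primrec sat :: "('w, 'm) frame \<Rightarrow> (nat \<Rightarrow> 'w set) \<Rightarrow> 'w \<Rightarrow> 'm fm \<Rightarrow> bool" where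
  "sat F V w (Var n) = (w \<in> V n)"
| "sat F V w Bot = False"
| "sat F V w (Imp p q) = (sat F V w p \<longrightarrow> sat F V w q)"
| "sat F V w (Box a p) = (\<forall>v \<in> fst F. snd F a w v \<longrightarrow> sat F V v p)"

definition valid :: "('w, 'm) frame \<Rightarrow> 'm fm \<Rightarrow> bool" where
  "valid F \<phi> = (\<forall>V. \<forall>w \<in> fst F. sat F V w \<phi>)"

definition consistent :: "'m fm set \<Rightarrow> 'm fm set \<Rightarrow> bool" where
  "consistent L \<Gamma> = (\<not> (\<exists>ps. set ps \<subseteq> \<Gamma> \<and> foldr Imp ps Bot \<in> L))"

definition max_consistent :: "'m fm set \<Rightarrow> 'm fm set \<Rightarrow> bool" where
  "max_consistent L \<Gamma> = (consistent L \<Gamma> \<and> (\<forall>\<phi>. \<phi> \<notin> \<Gamma> \<longrightarrow> \<not> consistent L (insert \<phi> \<Gamma>)))"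

definition canonical_frame :: "'m fm set \<Rightarrow> ('m fm set, 'm) frame" where
  "canonical_frame L = ({\<Gamma>. max_consistent L \<Gamma>},
     (\<lambda>a \<Gamma> \<Delta>. \<forall>\<phi>. Box a \<phi> \<in> \<Gamma> \<longrightarrow> \<phi> \<in> \<Delta>))"

definition canonical :: "'m fm \<Rightarrow> bool" where
  "canonical \<phi> = valid (canonical_frame (KL {\<phi>})) \<phi>"

definition bounded_morphism :: "('w, 'm) frame \<Rightarrow> ('v, 'm) frame \<Rightarrow> ('w \<Rightarrow> 'v) \<Rightarrow> bool" where
  "bounded_morphism F G f =
     ((\<forall>x \<in> fst F. f x \<in> fst G) \<and>
      (\<forall>a. \<forall>x \<in> fst F. \<forall>y \<in> fst F. snd F a x y \<longrightarrow> snd G a (f x) (f y)) \<and>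
      (\<forall>a. \<forall>x \<in> fst F. \<forall>v \<in> fst G. snd G a (f x) v \<longrightarrow>
           (\<exists>u \<in> fst F. snd F a x u \<and> f u = v)))"

definition inverse_system :: "(nat \<Rightarrow> ('w, 'm) frame) \<Rightarrow> (nat \<Rightarrow> nat \<Rightarrow> 'w \<Rightarrow> 'w) \<Rightarrow> bool" where
  "inverse_system F f =
     ((\<forall>i j. j \<le> i \<longrightarrow> bounded_morphism (F i) (F j) (f i j)) \<and>
      (\<forall>i. \<forall>x \<in> fst (F i). f i i x = x) \<and>
      (\<forall>i j k. k \<le> j \<longrightarrow> j \<le> i \<longrightarrow> (\<forall>x \<in> fst (F i). f j k (f i j x) = f i k x)))"

definition inverse_limit :: "(nat \<Rightarrow> ('w, 'm) frame) \<Rightarrow> (nat \<Rightarrow> nat \<Rightarrow> 'w \<Rightarrow> 'w) \<Rightarrow> (nat \<Rightarrow> 'w, 'm) frame" where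
  "inverse_limit F f =
     ({x. (\<forall>i. x i \<in> fst (F i)) \<and> (\<forall>i j. j \<le> i \<longrightarrow> f i j (x i) = x j)},
      (\<lambda>a x y. \<forall>i. snd (F i) a (x i) (y i)))"

definition finite_frame :: "('w, 'm) frame \<Rightarrow> bool" where
  "finite_frame F = finite (fst F)"

end

theory Submission
  imports Defs "HOL-Library.Nat_Bijection"
begin


abbreviation Neg :: "'m fm \<Rightarrow> 'm fm" where "Neg p \<equiv> Imp p Bot"

lemma K_id: "Imp p p \<in> KL S"
proof -
  have "Imp (Imp p (Imp (Imp p p) p)) (Imp (Imp p (Imp p p)) (Imp p p)) \<in> KL S" by (rule KL.ax2)
  moreover have "Imp p (Imp (Imp p p) p) \<in> KL S" by (rule KL.ax1)
  ultimately have "Imp (Imp p (Imp p p)) (Imp p p) \<in> KL S" by (rule KL.mp)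
  moreover have "Imp p (Imp p p) \<in> KL S" by (rule KL.ax1)
  ultimately show ?thesis by (rule KL.mp)
qed

lemma K_imp1: "q \<in> KL S \<Longrightarrow> Imp p q \<in> KL S"
  by (rule KL.mp[OF KL.ax1])

lemma K_mp2: "Imp p (Imp q r) \<in> KL S \<Longrightarrow> Imp p q \<in> KL S \<Longrightarrow> Imp p r \<in> KL S"
  by (rule KL.mp[OF KL.mp[OF KL.ax2]])

lemma K_hs: "Imp p q \<in> KL S \<Longrightarrow> Imp q r \<in> KL S \<Longrightarrow> Imp p r \<in> KL S"
  by (rule K_mp2[OF K_imp1])

lemma K_lift: "Imp X Y \<in> KL S \<Longrightarrow> Imp (Imp a X) (Imp a Y) \<in> KL S"
  by (rule KL.mp[OF KL.ax2 K_imp1])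

lemma K_lift2: "Imp X (Imp Y Z) \<in> KL S \<Longrightarrow> Imp (Imp a X) (Imp (Imp a Y) (Imp a Z)) \<in> KL S"
  by (rule K_hs[OF K_lift KL.ax2])

lemma K_elim_mid: "Imp X (Imp B C) \<in> KL S \<Longrightarrow> B \<in> KL S \<Longrightarrow> Imp X C \<in> KL S"
  by (rule K_mp2, assumption, rule K_imp1)

lemma K_hs_int: "Imp (Imp Q R) (Imp (Imp P Q) (Imp P R)) \<in> KL S"
  by (rule K_hs[OF KL.ax1 KL.ax2])

lemma K_exch: "Imp (Imp A (Imp B C)) (Imp B (Imp A C)) \<in> KL S"
proof -
  have "Imp (Imp (Imp A B) (Imp A C)) (Imp B (Imp A C)) \<in> KL S"
    by (rule K_elim_mid[OF K_hs_int KL.ax1])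
  then show ?thesis by (rule K_hs[OF KL.ax2])
qed

lemma K_contr: "Imp (Imp p (Imp p G)) (Imp p G) \<in> KL S"
  by (rule K_elim_mid[OF KL.ax2 K_id])

lemma foldr_mp: "Imp (foldr Imp ps (Imp A B)) (Imp (foldr Imp ps A) (foldr Imp ps B)) \<in> KL S"
  by (induction ps) (auto intro: K_id K_lift2)

lemma foldr_mono: "Imp X Y \<in> KL S \<Longrightarrow> Imp (foldr Imp ps X) (foldr Imp ps Y) \<in> KL S"
  by (induction ps) (auto intro: K_lift)

lemma foldr_weak: "Imp X (foldr Imp qs X) \<in> KL S"
  by (induction qs) (auto intro: K_id K_hs[OF KL.ax1 K_lift])

lemma pull_in: "Imp (Imp p (foldr Imp rs (Imp p q))) (foldr Imp rs (Imp p q)) \<in> KL S"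
  by (induction rs) (auto intro: K_contr K_hs[OF K_exch K_lift])

lemma ded_int: "Imp (foldr Imp ps q) (foldr Imp (removeAll p ps) (Imp p q)) \<in> KL S"
proof (induction ps)
  case Nil
  then show ?case by (simp add: KL.ax1)
next
  case (Cons a ps)
  show ?case
  proof (cases "a = p")
    case True
    then show ?thesis using K_hs[OF K_lift[OF Cons] pull_in] by simp
  next
    case False
    then show ?thesis using K_lift[OF Cons] by simp
  qed
qed

lemma box_int: "Imp (Box a (foldr Imp ps c)) (foldr Imp (map (Box a) ps) (Box a c)) \<in> KL S"
  by (induction ps) (auto intro: K_id K_hs[OF KL.axK K_lift])

definition Der :: "'m fm set \<Rightarrow> 'm fm set \<Rightarrow> 'm fm \<Rightarrow> bool" where
  "Der S H \<phi> = (\<exists>ps. set ps \<subseteq> H \<and> foldr Imp ps \<phi> \<in> KL S)"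

lemma consistent_Der: "consistent (KL S) H = (\<not> Der S H Bot)"
  unfolding consistent_def Der_def by blast

lemma Der_L: "\<phi> \<in> KL S \<Longrightarrow> Der S H \<phi>"
  unfolding Der_def by (rule exI[of _ "[]"]) simp

lemma Der_hyp: "\<phi> \<in> H \<Longrightarrow> Der S H \<phi>"
  unfolding Der_def by (rule exI[of _ "[\<phi>]"]) (simp add: K_id)

lemma Der_mono: "Der S H \<phi> \<Longrightarrow> H \<subseteq> H' \<Longrightarrow> Der S H' \<phi>"
  unfolding Der_def by blast

lemma Der_mp: assumes "Der S H (Imp p q)" "Der S H p" shows "Der S H q"
proof -
  obtain ps1 where 1: "set ps1 \<subseteq> H" "foldr Imp ps1 (Imp p q) \<in> KL S" using assms(1) Der_def by blast
  obtain ps2 where 2: "set ps2 \<subseteq> H" "foldr Imp ps2 p \<in> KL S" using assms(2) Der_def by blast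
  have a: "foldr Imp (ps1 @ ps2) (Imp p q) \<in> KL S"
    using KL.mp[OF foldr_mono[OF foldr_weak] 1(2), of ps2] by simp
  have b: "foldr Imp (ps1 @ ps2) p \<in> KL S"
    using KL.mp[OF foldr_weak 2(2), of ps1] by simp
  have "foldr Imp (ps1 @ ps2) q \<in> KL S" by (rule KL.mp[OF KL.mp[OF foldr_mp a] b])
  then show ?thesis unfolding Der_def using 1(1) 2(1) by (intro exI[of _ "ps1@ps2"]) auto
qed

lemma Der_ded: assumes "Der S (insert p H) q" shows "Der S H (Imp p q)"
proof -
  obtain ps where ps: "set ps \<subseteq> insert p H" "foldr Imp ps q \<in> KL S" using assms Der_def by blast
  have "foldr Imp (removeAll p ps) (Imp p q) \<in> KL S" by (rule KL.mp[OF ded_int ps(2)])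
  moreover have "set (removeAll p ps) \<subseteq> H" using ps(1) by auto
  ultimately show ?thesis unfolding Der_def by blast
qed

lemma Der_bot: "Der S H Bot \<Longrightarrow> Der S H \<phi>"
  by (rule Der_mp[OF Der_L[OF KL.ax3]], rule Der_mp[OF Der_L[OF KL.ax1]])

lemma Der_cut: "Der S H' \<phi> \<Longrightarrow> (\<And>x. x \<in> H' \<Longrightarrow> Der S H x) \<Longrightarrow> Der S H \<phi>"
proof -
  assume a: "Der S H' \<phi>" and b: "\<And>x. x \<in> H' \<Longrightarrow> Der S H x"
  obtain ps where ps: "set ps \<subseteq> H'" "foldr Imp ps \<phi> \<in> KL S" using a Der_def by blast
  have "\<And>\<chi>. set ps \<subseteq> H' \<Longrightarrow> Der S H (foldr Imp ps \<chi>) \<Longrightarrow> Der S H \<chi>"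
  proof (induction ps)
    case Nil then show ?case by simp
  next
    case (Cons x ps)
    then show ?case using Der_mp b by simp blast
  qed
  then show ?thesis using ps Der_L by blast
qed

lemma Der_box: assumes "Der S B c" "\<And>\<phi>. \<phi> \<in> B \<Longrightarrow> Box a \<phi> \<in> G"
  shows "Der S G (Box a c)"
proof -
  obtain ps where ps: "set ps \<subseteq> B" "foldr Imp ps c \<in> KL S" using assms(1) Der_def by blast
  have "foldr Imp (map (Box a) ps) (Box a c) \<in> KL S" by (rule KL.mp[OF box_int KL.nec[OF ps(2)]])
  moreover have "set (map (Box a) ps) \<subseteq> G" using ps(1) assms(2) by auto
  ultimately show ?thesis unfolding Der_def by blast
qed




context fixes S :: "'m fm set" and \<Gamma> :: "'m fm set"
  assumes mc: "max_consistent (KL S) \<Gamma>"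
begin

lemma mcs_cons: "\<not> Der S \<Gamma> Bot"
  using mc unfolding max_consistent_def consistent_Der by blast

lemma mcs_der: "Der S \<Gamma> \<phi> \<Longrightarrow> \<phi> \<in> \<Gamma>"
proof (rule ccontr)
  assume a: "Der S \<Gamma> \<phi>" "\<phi> \<notin> \<Gamma>"
  then have "Der S (insert \<phi> \<Gamma>) Bot" using mc unfolding max_consistent_def consistent_Der by blast
  then have "Der S \<Gamma> (Imp \<phi> Bot)" by (rule Der_ded)
  then have "Der S \<Gamma> Bot" using a(1) Der_mp by blast
  then show False using mcs_cons by blast
qed

lemma mcs_bot: "Bot \<notin> \<Gamma>"
  using mcs_cons Der_hyp by blast

lemma mcs_neg: "\<phi> \<notin> \<Gamma> \<Longrightarrow> Neg \<phi> \<in> \<Gamma>"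
proof -
  assume "\<phi> \<notin> \<Gamma>"
  then have "Der S (insert \<phi> \<Gamma>) Bot" using mc unfolding max_consistent_def consistent_Der by blast
  then show ?thesis by (intro mcs_der Der_ded)
qed

lemma mcs_mp: "Imp p q \<in> \<Gamma> \<Longrightarrow> p \<in> \<Gamma> \<Longrightarrow> q \<in> \<Gamma>"
  by (meson Der_hyp Der_mp mcs_der)

lemma mcs_L: "\<phi> \<in> KL S \<Longrightarrow> \<phi> \<in> \<Gamma>"
  by (simp add: Der_L mcs_der)

lemma mcs_imp: "Imp p q \<in> \<Gamma> \<longleftrightarrow> (p \<in> \<Gamma> \<longrightarrow> q \<in> \<Gamma>)"
proof
  assume "Imp p q \<in> \<Gamma>" then show "p \<in> \<Gamma> \<longrightarrow> q \<in> \<Gamma>" using mcs_mp by blast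
next
  assume a: "p \<in> \<Gamma> \<longrightarrow> q \<in> \<Gamma>"
  show "Imp p q \<in> \<Gamma>"
  proof (cases "p \<in> \<Gamma>")
    case True
    then show ?thesis using a mcs_mp KL.ax1 mcs_L by blast
  next
    case False
    then have n: "Neg p \<in> \<Gamma>" by (rule mcs_neg)
    have "Der S (insert p \<Gamma>) Bot"
      by (rule Der_mp[OF Der_hyp Der_hyp]) (use n in auto)
    then have "Der S (insert p \<Gamma>) q" by (rule Der_bot)
    then show ?thesis by (intro mcs_der Der_ded)
  qed
qed

end

fun disj :: "'m fm list \<Rightarrow> 'm fm" where
  "disj [] = Bot"
| "disj (p # ps) = Imp (Neg p) (disj ps)"

lemma mcs_disj: "max_consistent (KL S) \<Gamma> \<Longrightarrow> disj ps \<in> \<Gamma> \<Longrightarrow> \<exists>p\<in>set ps. p \<in> \<Gamma>"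
  by (induction ps) (auto simp: mcs_bot mcs_imp mcs_neg)

lemma sat_disj: "sat F V w (disj ps) = (\<exists>p\<in>set ps. sat F V w p)"
  by (induction ps) auto

lemma lindenbaum:
  assumes "consistent (KL S) D"
  shows "\<exists>\<Gamma>. D \<subseteq> \<Gamma> \<and> max_consistent (KL S) \<Gamma>"
proof -
  let ?A = "{G. D \<subseteq> G \<and> consistent (KL S) G}"
  have "\<forall>C\<in>chains ?A. \<exists>U\<in>?A. \<forall>X\<in>C. X \<subseteq> U"
  proof
    fix C assume C: "C \<in> chains ?A"
    show "\<exists>U\<in>?A. \<forall>X\<in>C. X \<subseteq> U"
    proof (cases "C = {}")
      case True then show ?thesis using assms by auto
    next
      case False
      have ch: "C \<subseteq> ?A" "\<forall>X\<in>C. \<forall>Y\<in>C. X \<subseteq> Y \<or> Y \<subseteq> X"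
        using C unfolding chains_def chain_subset_def by auto
      have fin: "finite F \<Longrightarrow> F \<subseteq> \<Union>C \<Longrightarrow> \<exists>X\<in>C. F \<subseteq> X" for F
      proof (induction F rule: finite_induct)
        case empty then show ?case using False by auto
      next
        case (insert x F)
        then obtain X where X: "X \<in> C" "F \<subseteq> X" by auto
        obtain Y where Y: "Y \<in> C" "x \<in> Y" using insert by auto
        show ?case using ch(2) X Y by (metis insert_subset subset_trans)
      qed
      have "consistent (KL S) (\<Union>C)"
        unfolding consistent_def
      proof
        assume "\<exists>ps. set ps \<subseteq> \<Union>C \<and> foldr Imp ps Bot \<in> KL S"
        then obtain ps where ps: "set ps \<subseteq> \<Union>C" "foldr Imp ps Bot \<in> KL S" by blast
        then obtain X where "X \<in> C" "set ps \<subseteq> X" using fin by blast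
        then show False using ch(1) ps(2) unfolding consistent_def by blast
      qed
      moreover have "D \<subseteq> \<Union>C" using False ch(1) by blast
      ultimately show ?thesis by blast
    qed
  qed
  then obtain M where M: "M \<in> ?A" "\<forall>X\<in>?A. M \<subseteq> X \<longrightarrow> X = M" using Zorn_Lemma2[of ?A] by blast
  have "max_consistent (KL S) M"
    unfolding max_consistent_def using M by blast
  then show ?thesis using M by blast
qed

section \<open>Soundness\<close>

lemma sat_subst: "sat F V w (subst \<sigma> p) = sat F (\<lambda>n. {u. sat F V u (\<sigma> n)}) w p"
  by (induction p arbitrary: w) auto

lemma soundness:
  assumes "\<And>s. s \<in> S \<Longrightarrow> valid F s" "\<phi> \<in> KL S" shows "valid F \<phi>"
  using assms(2)
proof (induction rule: KL.induct)
  case (hyp \<phi>) then show ?case using assms(1) by blast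
next
  case (sub p \<sigma>) then show ?case unfolding valid_def by (simp add: sat_subst)
qed (auto simp: valid_def)

lemma KL_mono: "A \<subseteq> KL B \<Longrightarrow> \<phi> \<in> KL A \<Longrightarrow> \<phi> \<in> KL B"
proof -
  assume a: "A \<subseteq> KL B" "\<phi> \<in> KL A"
  from a(2) show ?thesis by (induction rule: KL.induct) (use a(1) in \<open>auto intro: KL.intros\<close>)
qed

lemma KL_compact: "\<phi> \<in> KL A \<Longrightarrow> \<exists>A'. finite A' \<and> A' \<subseteq> A \<and> \<phi> \<in> KL A'"
proof (induction rule: KL.induct)
  case (hyp \<phi>) then show ?case by (intro exI[of _ "{\<phi>}"]) (auto intro: KL.hyp)
next
  case (mp p q)
  then obtain A1 A2 where "finite A1" "A1 \<subseteq> A" "Imp p q \<in> KL A1" "finite A2" "A2 \<subseteq> A" "p \<in> KL A2" by blast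
  moreover have "A1 \<subseteq> KL (A1 \<union> A2)" "A2 \<subseteq> KL (A1 \<union> A2)" by (auto intro: KL.hyp)
  ultimately have "Imp p q \<in> KL (A1 \<union> A2)" "p \<in> KL (A1 \<union> A2)"
    using KL_mono by blast+
  then have "q \<in> KL (A1 \<union> A2)" by (rule KL.mp)
  then show ?case using \<open>finite A1\<close> \<open>finite A2\<close> \<open>A1 \<subseteq> A\<close> \<open>A2 \<subseteq> A\<close> by blast
next
  case (nec p a) then show ?case by (auto intro: KL.nec)
next
  case (sub p \<sigma>) then show ?case by (auto intro: KL.sub)
qed (auto intro: KL.intros)

section \<open>Preservation under generated subframes plus bounded morphic images\<close>

lemma preserve:
  fixes W :: "'w set" and R :: "'m \<Rightarrow> 'w \<Rightarrow> 'w \<Rightarrow> bool" and X :: "('v,'m) frame"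
  assumes val: "valid (W, R) \<psi>"
    and G: "G \<subseteq> W" "\<And>a x v. x \<in> G \<Longrightarrow> v \<in> W \<Longrightarrow> R a x v \<Longrightarrow> v \<in> G"
    and h: "\<And>x. x \<in> G \<Longrightarrow> h x \<in> fst X"
    and fw: "\<And>a x y. x \<in> G \<Longrightarrow> y \<in> G \<Longrightarrow> R a x y \<Longrightarrow> snd X a (h x) (h y)"
    and bk: "\<And>a x v. x \<in> G \<Longrightarrow> v \<in> fst X \<Longrightarrow> snd X a (h x) v \<Longrightarrow> \<exists>u\<in>G. R a x u \<and> h u = v"
    and sj: "\<And>y. y \<in> fst X \<Longrightarrow> \<exists>x\<in>G. h x = y"
  shows "valid X \<psi>"
  unfolding valid_def
proof (intro allI ballI)
  fix V y assume y: "y \<in> fst X"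
  define V' where "V' n = {x. h x \<in> V n}" for n :: nat
  have eq: "x \<in> G \<Longrightarrow> sat (W, R) V' x \<phi> = sat X V (h x) \<phi>" for x \<phi>
  proof (induction \<phi> arbitrary: x)
    case (Var n) then show ?case by (simp add: V'_def)
  next
    case (Box a \<phi>)
    show ?case
    proof
      assume L: "sat (W, R) V' x (Box a \<phi>)"
      show "sat X V (h x) (Box a \<phi>)"
      proof (simp, intro ballI impI)
        fix v assume v: "v \<in> fst X" "snd X a (h x) v"
        then obtain u where u: "u \<in> G" "R a x u" "h u = v" using bk[OF Box.prems] by blast
        then show "sat X V v \<phi>" using L Box.IH G(1) by auto
      qed
    next
      assume L: "sat X V (h x) (Box a \<phi>)"
      show "sat (W, R) V' x (Box a \<phi>)"
        using L fw Box.prems Box.IH G h by auto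
    qed
  qed auto
  obtain x where "x \<in> G" "h x = y" using sj y by blast
  then show "sat X V y \<psi>" using eq[of x \<psi>] val G(1) unfolding valid_def by auto
qed




definition q :: "nat \<Rightarrow> nat \<Rightarrow> 'm fm" where "q i w = Var (prod_encode (i, w))"

lemma sat_foldr: "sat F V w (foldr Imp ps c) = ((\<forall>p\<in>set ps. sat F V w p) \<longrightarrow> sat F V w c)"
  by (induction ps) auto

lemma chain_list:
  assumes "\<And>m n::nat. m \<le> n \<Longrightarrow> A m \<subseteq> A n" shows "set ps \<subseteq> (\<Union>M. A M) \<Longrightarrow> \<exists>M. set ps \<subseteq> A M"
proof (induction ps)
  case Nil then show ?case by simp
next
  case (Cons x ps)
  then obtain M1 M2 where "set ps \<subseteq> A M1" "x \<in> A M2" by auto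
  moreover have "A M1 \<subseteq> A (max M1 M2)" by (rule assms) simp
  moreover have "A M2 \<subseteq> A (max M1 M2)" by (rule assms) simp
  ultimately have "set (x # ps) \<subseteq> A (max M1 M2)" by auto
  then show ?case by blast
qed

context
  fixes F :: "nat \<Rightarrow> (nat, 'm) frame" and f :: "nat \<Rightarrow> nat \<Rightarrow> nat \<Rightarrow> nat"
  assumes sys: "inverse_system F f" and fin: "\<forall>i. finite_frame (F i)"
begin

lemma bm: "j \<le> i \<Longrightarrow> bounded_morphism (F i) (F j) (f i j)"
  using sys unfolding inverse_system_def by blast

lemma fin_i: "finite (fst (F i))" using fin unfolding finite_frame_def by blast

lemma f_in: "j \<le> i \<Longrightarrow> x \<in> fst (F i) \<Longrightarrow> f i j x \<in> fst (F j)"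
  using bm unfolding bounded_morphism_def by blast

lemma f_fw: "j \<le> i \<Longrightarrow> x \<in> fst (F i) \<Longrightarrow> y \<in> fst (F i) \<Longrightarrow> snd (F i) a x y \<Longrightarrow> snd (F j) a (f i j x) (f i j y)"
  using bm unfolding bounded_morphism_def by blast

lemma f_bk: "j \<le> i \<Longrightarrow> x \<in> fst (F i) \<Longrightarrow> v \<in> fst (F j) \<Longrightarrow> snd (F j) a (f i j x) v \<Longrightarrow> \<exists>u\<in>fst (F i). snd (F i) a x u \<and> f i j u = v"
  using bm unfolding bounded_morphism_def by blast

lemma f_comp: "k \<le> j \<Longrightarrow> j \<le> i \<Longrightarrow> x \<in> fst (F i) \<Longrightarrow> f j k (f i j x) = f i k x"
  using sys unfolding inverse_system_def by blast

definition sl :: "nat \<Rightarrow> nat list" where "sl i = sorted_list_of_set (fst (F i))"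

lemma set_sl: "set (sl i) = fst (F i)" unfolding sl_def using fin_i by simp

inductive_set D0 :: "nat \<Rightarrow> 'm fm set" for M :: nat where
  d_one: "i \<le> M \<Longrightarrow> disj (map (q i) (sl i)) \<in> D0 M"
| d_uniq: "i \<le> M \<Longrightarrow> w \<in> fst (F i) \<Longrightarrow> v \<in> fst (F i) \<Longrightarrow> w \<noteq> v \<Longrightarrow> Imp (q i w) (Neg (q i v)) \<in> D0 M"
| d_comp: "j \<le> i \<Longrightarrow> i \<le> M \<Longrightarrow> w \<in> fst (F i) \<Longrightarrow> Imp (q i w) (q j (f i j w)) \<in> D0 M"
| d_dia: "i \<le> M \<Longrightarrow> w \<in> fst (F i) \<Longrightarrow> v \<in> fst (F i) \<Longrightarrow> snd (F i) a w v \<Longrightarrow>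
     Imp (q i w) (Neg (Box a (Neg (q i v)))) \<in> D0 M"
| d_box: "i \<le> M \<Longrightarrow> w \<in> fst (F i) \<Longrightarrow>
     Imp (q i w) (Box a (disj (map (q i) (filter (snd (F i) a w) (sl i))))) \<in> D0 M"

lemma D0_mono: "\<delta> \<in> D0 M \<Longrightarrow> M \<le> M' \<Longrightarrow> \<delta> \<in> D0 M'"
  by (induction rule: D0.induct) (auto intro: D0.intros)

definition Dlev :: "nat \<Rightarrow> 'm fm set" where "Dlev M = {foldr Box bs \<delta> | bs \<delta>. \<delta> \<in> D0 M}"

definition Delta :: "'m fm set" where "Delta = (\<Union>M. Dlev M)"

lemma Dlev_mono: "M \<le> M' \<Longrightarrow> Dlev M \<subseteq> Dlev M'"
  unfolding Dlev_def using D0_mono by blast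

lemma D0_Delta: "\<delta> \<in> D0 M \<Longrightarrow> \<delta> \<in> Delta"
  unfolding Delta_def Dlev_def by (auto intro!: exI[of _ M] exI[of _ "[]"])

lemma Delta_Box: "\<phi> \<in> Delta \<Longrightarrow> Box a \<phi> \<in> Delta"
  unfolding Delta_def Dlev_def by (auto intro!: exI[of _ "a # _"]) (metis foldr_Cons o_apply)

definition VM :: "nat \<Rightarrow> nat \<Rightarrow> nat set" where
  "VM M n = {u \<in> fst (F M). \<exists>i w. n = prod_encode (i, w) \<and> i \<le> M \<and> f M i u = w}"

lemma sat_q: "u \<in> fst (F M) \<Longrightarrow> sat (F M) (VM M) u (q i w) = (i \<le> M \<and> f M i u = w)"
  unfolding q_def VM_def by auto

lemma D0_true: "\<delta> \<in> D0 M \<Longrightarrow> u \<in> fst (F M) \<Longrightarrow> sat (F M) (VM M) u \<delta>"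
proof (induction rule: D0.induct)
  case (d_one i)
  then show ?case using f_in[of i M u] by (auto simp: sat_disj set_sl sat_q)
next
  case (d_uniq i w v)
  then show ?case by (auto simp: sat_q)
next
  case (d_comp j i w)
  then show ?case by (auto simp: sat_q f_comp)
next
  case (d_dia i w v a)
  then show ?case using f_bk[of i M u v a] by (auto simp: sat_q)
next
  case (d_box i w a)
  then show ?case using f_fw[of i M u _ a] f_in[of i M] by (auto simp: sat_q sat_disj set_sl)
qed

lemma Dlev_true: "\<delta> \<in> Dlev M \<Longrightarrow> u \<in> fst (F M) \<Longrightarrow> sat (F M) (VM M) u \<delta>"
proof -
  assume "\<delta> \<in> Dlev M" "u \<in> fst (F M)"
  then obtain bs d where d: "\<delta> = foldr Box bs d" "d \<in> D0 M" unfolding Dlev_def by blast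
  have "\<forall>u\<in>fst (F M). sat (F M) (VM M) u (foldr Box bs d)"
    by (induction bs) (auto simp: D0_true[OF d(2)])
  then show ?thesis using d \<open>u \<in> fst (F M)\<close> by blast
qed

abbreviation X where "X \<equiv> inverse_limit F f"

lemma X_in: "y \<in> fst X \<Longrightarrow> y i \<in> fst (F i)"
  unfolding inverse_limit_def by auto

lemma X_comp: "y \<in> fst X \<Longrightarrow> j \<le> i \<Longrightarrow> f i j (y i) = y j"
  unfolding inverse_limit_def by auto

lemma surj_cons:
  assumes val: "\<forall>i. valid (F i) \<psi>" and y: "y \<in> fst X"
  shows "consistent (KL {\<psi>}) (Delta \<union> range (\<lambda>i. q i (y i)))"
  unfolding consistent_def
proof
  assume "\<exists>ps. set ps \<subseteq> Delta \<union> range (\<lambda>i. q i (y i)) \<and> foldr Imp ps Bot \<in> KL {\<psi>}"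
  then obtain ps where ps: "set ps \<subseteq> Delta \<union> range (\<lambda>i. q i (y i))" "foldr Imp ps Bot \<in> KL {\<psi>}" by blast
  let ?A = "\<lambda>M. Dlev M \<union> (\<lambda>i. q i (y i)) ` {..M}"
  have "Delta \<union> range (\<lambda>i. q i (y i)) \<subseteq> (\<Union>M. ?A M)"
  proof
    fix x assume "x \<in> Delta \<union> range (\<lambda>i. q i (y i))"
    then show "x \<in> (\<Union>M. ?A M)"
    proof
      assume "x \<in> Delta"
      then obtain M where "x \<in> Dlev M" unfolding Delta_def by blast
      then have "x \<in> ?A M" by simp
      then show ?thesis by (rule UN_I[rotated]) simp
    next
      assume "x \<in> range (\<lambda>i. q i (y i))"
      then obtain i where "x = q i (y i)" by blast
      then have "x \<in> ?A i" by simp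
      then show ?thesis by (rule UN_I[rotated]) simp
    qed
  qed
  then have un: "set ps \<subseteq> (\<Union>M. ?A M)" using ps(1) by (rule subset_trans[rotated])
  have mo: "\<And>m n. m \<le> n \<Longrightarrow> ?A m \<subseteq> ?A n"
  proof -
    fix m n :: nat assume "m \<le> n"
    then show "?A m \<subseteq> ?A n" using Dlev_mono[of m n] by auto
  qed
  obtain M where M: "set ps \<subseteq> ?A M" using chain_list[of ?A, OF mo un] by blast
  have "valid (F M) (foldr Imp ps Bot)" using soundness[OF _ ps(2), of "F M"] val by blast
  then have "sat (F M) (VM M) (y M) (foldr Imp ps Bot)" using X_in[OF y] unfolding valid_def by blast
  moreover have "\<forall>p\<in>set ps. sat (F M) (VM M) (y M) p"
  proof
    fix p assume "p \<in> set ps"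
    then have "p \<in> ?A M" using M by blast
    then show "sat (F M) (VM M) (y M) p"
      using Dlev_true X_in[OF y] sat_q X_comp[OF y] by auto
  qed
  ultimately show False by (simp add: sat_foldr)
qed


definition hh :: "'m fm set \<Rightarrow> nat \<Rightarrow> nat" where
  "hh \<Gamma> i = (THE w. w \<in> fst (F i) \<and> q i w \<in> \<Gamma>)"

context fixes S :: "'m fm set" begin

lemma G_ex: "max_consistent (KL S) \<Gamma> \<Longrightarrow> Delta \<subseteq> \<Gamma> \<Longrightarrow> \<exists>w\<in>fst (F i). q i w \<in> \<Gamma>"
proof -
  assume mc: "max_consistent (KL S) \<Gamma>" and D: "Delta \<subseteq> \<Gamma>"
  have "disj (map (q i) (sl i)) \<in> \<Gamma>" using D D0_Delta[OF d_one[of i i]] by blast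
  then obtain p where "p \<in> set (map (q i) (sl i))" "p \<in> \<Gamma>" using mcs_disj[OF mc] by blast
  then show ?thesis using set_sl by auto
qed

lemma G_uniq: "max_consistent (KL S) \<Gamma> \<Longrightarrow> Delta \<subseteq> \<Gamma> \<Longrightarrow> w \<in> fst (F i) \<Longrightarrow> v \<in> fst (F i)
   \<Longrightarrow> q i w \<in> \<Gamma> \<Longrightarrow> q i v \<in> \<Gamma> \<Longrightarrow> w = v"
proof (rule ccontr)
  assume mc: "max_consistent (KL S) \<Gamma>" and D: "Delta \<subseteq> \<Gamma>" and a: "w \<in> fst (F i)" "v \<in> fst (F i)"
    "q i w \<in> \<Gamma>" "q i v \<in> \<Gamma>" "w \<noteq> v"
  have "Imp (q i w) (Neg (q i v)) \<in> \<Gamma>" using D D0_Delta[OF d_uniq[of i i w v]] a by blast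
  then have "Bot \<in> \<Gamma>" using mcs_mp[OF mc] a by blast
  then show False using mcs_bot[OF mc] by blast
qed

lemma hh_prop: "max_consistent (KL S) \<Gamma> \<Longrightarrow> Delta \<subseteq> \<Gamma> \<Longrightarrow> hh \<Gamma> i \<in> fst (F i) \<and> q i (hh \<Gamma> i) \<in> \<Gamma>"
proof -
  assume mc: "max_consistent (KL S) \<Gamma>" and D: "Delta \<subseteq> \<Gamma>"
  have "\<exists>!w. w \<in> fst (F i) \<and> q i w \<in> \<Gamma>" using G_ex[OF mc D] G_uniq[OF mc D] by blast
  then show ?thesis unfolding hh_def by (rule theI')
qed

lemma hh_eq: "max_consistent (KL S) \<Gamma> \<Longrightarrow> Delta \<subseteq> \<Gamma> \<Longrightarrow> w \<in> fst (F i) \<Longrightarrow> q i w \<in> \<Gamma> \<Longrightarrow> hh \<Gamma> i = w"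
  using hh_prop G_uniq by metis

lemma hh_X: "max_consistent (KL S) \<Gamma> \<Longrightarrow> Delta \<subseteq> \<Gamma> \<Longrightarrow> hh \<Gamma> \<in> fst X"
proof -
  assume mc: "max_consistent (KL S) \<Gamma>" and D: "Delta \<subseteq> \<Gamma>"
  have "f i j (hh \<Gamma> i) = hh \<Gamma> j" if "j \<le> i" for i j
  proof -
    have h: "hh \<Gamma> i \<in> fst (F i)" "q i (hh \<Gamma> i) \<in> \<Gamma>" using hh_prop[OF mc D] by auto
    have "Imp (q i (hh \<Gamma> i)) (q j (f i j (hh \<Gamma> i))) \<in> \<Gamma>" using D D0_Delta[OF d_comp[OF that _ h(1), of i]] by blast
    then have "q j (f i j (hh \<Gamma> i)) \<in> \<Gamma>" using mcs_mp[OF mc] h by blast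
    then show ?thesis using hh_eq[OF mc D] f_in[OF that h(1)] by metis
  qed
  then show ?thesis unfolding inverse_limit_def using hh_prop[OF mc D] by auto
qed

lemma hh_fw:
  assumes mc: "max_consistent (KL S) \<Gamma>" and D: "Delta \<subseteq> \<Gamma>"
    and mc': "max_consistent (KL S) \<Gamma>'" and D': "Delta \<subseteq> \<Gamma>'"
    and R: "\<forall>\<phi>. Box a \<phi> \<in> \<Gamma> \<longrightarrow> \<phi> \<in> \<Gamma>'"
  shows "snd (F i) a (hh \<Gamma> i) (hh \<Gamma>' i)"
proof -
  have h: "hh \<Gamma> i \<in> fst (F i)" "q i (hh \<Gamma> i) \<in> \<Gamma>" using hh_prop[OF mc D] by auto
  let ?d = "disj (map (q i) (filter (snd (F i) a (hh \<Gamma> i)) (sl i)))"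
  have "Imp (q i (hh \<Gamma> i)) (Box a ?d) \<in> \<Gamma>" using D D0_Delta[OF d_box[OF _ h(1), of i a]] by blast
  then have "Box a ?d \<in> \<Gamma>" using mcs_mp[OF mc] h by blast
  then have "?d \<in> \<Gamma>'" using R by blast
  then obtain p where "p \<in> set (map (q i) (filter (snd (F i) a (hh \<Gamma> i)) (sl i)))" "p \<in> \<Gamma>'"
    using mcs_disj[OF mc'] by blast
  then obtain v where v: "v \<in> fst (F i)" "snd (F i) a (hh \<Gamma> i) v" "q i v \<in> \<Gamma>'" using set_sl by auto
  then show ?thesis using hh_eq[OF mc' D' v(1) v(3)] by simp
qed

end

lemma hh_bk:
  assumes mc: "max_consistent (KL S) \<Gamma>" and D: "Delta \<subseteq> \<Gamma>"
    and y: "y \<in> fst X" and R: "\<forall>i. snd (F i) a (hh \<Gamma> i) (y i)"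
  shows "\<exists>\<Gamma>'. max_consistent (KL S) \<Gamma>' \<and> Delta \<subseteq> \<Gamma>' \<and> (\<forall>\<phi>. Box a \<phi> \<in> \<Gamma> \<longrightarrow> \<phi> \<in> \<Gamma>') \<and> hh \<Gamma>' = y"
proof -
  let ?B = "{\<phi>. Box a \<phi> \<in> \<Gamma>}"
  have DB: "Delta \<subseteq> ?B" using D Delta_Box by blast
  have cons: "consistent (KL S) (?B \<union> range (\<lambda>i. q i (y i)))"
    unfolding consistent_Der
  proof
    assume "Der S (?B \<union> range (\<lambda>i. q i (y i))) Bot"
    then obtain ps where ps: "set ps \<subseteq> ?B \<union> range (\<lambda>i. q i (y i))" "foldr Imp ps Bot \<in> KL S"
      unfolding Der_def by blast
    let ?A = "\<lambda>M. ?B \<union> (\<lambda>i. q i (y i)) ` {..M}"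
    have "?B \<union> range (\<lambda>i. q i (y i)) \<subseteq> (\<Union>M. ?A M)"
    proof
      fix x assume "x \<in> ?B \<union> range (\<lambda>i. q i (y i))"
      then show "x \<in> (\<Union>M. ?A M)"
      proof
        assume "x \<in> ?B"
        then have "x \<in> ?A 0" by simp
        then show ?thesis by (rule UN_I[rotated]) simp
      next
        assume "x \<in> range (\<lambda>i. q i (y i))"
        then obtain i where "x = q i (y i)" by blast
        then have "x \<in> ?A i" by simp
        then show ?thesis by (rule UN_I[rotated]) simp
      qed
    qed
    then have un: "set ps \<subseteq> (\<Union>M. ?A M)" using ps(1) by (rule subset_trans[rotated])
    have mo: "\<And>m n. m \<le> n \<Longrightarrow> ?A m \<subseteq> ?A n" by auto
    obtain N where N: "set ps \<subseteq> ?A N" using chain_list[of ?A, OF mo un] by blast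
    then have "Der S (?A N) Bot" using ps(2) unfolding Der_def by blast
    moreover have "Der S (insert (q N (y N)) ?B) x" if xin: "x \<in> ?A N" for x
    proof (cases "x \<in> ?B")
      case True then show ?thesis by (intro Der_hyp) blast
    next
      case False
      then obtain i where i: "i \<le> N" "x = q i (y i)" using xin False by auto
      have "Imp (q N (y N)) (q i (f N i (y N))) \<in> Delta"
        by (rule D0_Delta[OF d_comp[OF i(1) _ X_in[OF y], of N]]) simp
      then have "Imp (q N (y N)) x \<in> ?B" using DB X_comp[OF y i(1)] i(2) by auto
      then show ?thesis by (intro Der_mp[OF Der_hyp Der_hyp]) auto
    qed
    ultimately have "Der S (insert (q N (y N)) ?B) Bot" by (rule Der_cut)
    then have "Der S ?B (Neg (q N (y N)))" by (rule Der_ded)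
    then have "Der S \<Gamma> (Box a (Neg (q N (y N))))" by (rule Der_box) simp
    then have b: "Box a (Neg (q N (y N))) \<in> \<Gamma>" by (rule mcs_der[OF mc])
    have h: "hh \<Gamma> N \<in> fst (F N)" "q N (hh \<Gamma> N) \<in> \<Gamma>" using hh_prop[OF mc D] by auto
    have "Imp (q N (hh \<Gamma> N)) (Neg (Box a (Neg (q N (y N))))) \<in> \<Gamma>"
      using D D0_Delta[OF d_dia[OF _ h(1) X_in[OF y] R[rule_format], of N]] by blast
    then have "Bot \<in> \<Gamma>" using mcs_mp[OF mc] h b by blast
    then show False using mcs_bot[OF mc] by blast
  qed
  obtain \<Gamma>' where G': "?B \<union> range (\<lambda>i. q i (y i)) \<subseteq> \<Gamma>'" "max_consistent (KL S) \<Gamma>'"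
    using lindenbaum[OF cons] by blast
  have D': "Delta \<subseteq> \<Gamma>'" using DB G'(1) by blast
  have "hh \<Gamma>' = y"
  proof
    fix i show "hh \<Gamma>' i = y i" using hh_eq[OF G'(2) D' X_in[OF y]] G'(1) by blast
  qed
  then show ?thesis using G' D' by blast
qed

lemma key:
  assumes val: "\<forall>i. valid (F i) \<psi>" and can: "canonical \<psi>"
  shows "valid X \<psi>"
proof (rule preserve[where W = "{\<Gamma>. max_consistent (KL {\<psi>}) \<Gamma>}"
      and R = "\<lambda>a \<Gamma> \<Delta>. \<forall>\<phi>. Box a \<phi> \<in> \<Gamma> \<longrightarrow> \<phi> \<in> \<Delta>"
      and G = "{\<Gamma>. max_consistent (KL {\<psi>}) \<Gamma> \<and> Delta \<subseteq> \<Gamma>}" and h = hh])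
  show "valid ({\<Gamma>. max_consistent (KL {\<psi>}) \<Gamma>}, \<lambda>a \<Gamma> \<Delta>. \<forall>\<phi>. Box a \<phi> \<in> \<Gamma> \<longrightarrow> \<phi> \<in> \<Delta>) \<psi>"
    using can unfolding canonical_def canonical_frame_def by simp
next
  show "{\<Gamma>. max_consistent (KL {\<psi>}) \<Gamma> \<and> Delta \<subseteq> \<Gamma>} \<subseteq> {\<Gamma>. max_consistent (KL {\<psi>}) \<Gamma>}" by blast
next
  fix a x v assume "x \<in> {\<Gamma>. max_consistent (KL {\<psi>}) \<Gamma> \<and> Delta \<subseteq> \<Gamma>}" "v \<in> {\<Gamma>. max_consistent (KL {\<psi>}) \<Gamma>}"
    "\<forall>\<phi>. Box a \<phi> \<in> x \<longrightarrow> \<phi> \<in> v"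
  then show "v \<in> {\<Gamma>. max_consistent (KL {\<psi>}) \<Gamma> \<and> Delta \<subseteq> \<Gamma>}" using Delta_Box by blast
next
  fix x assume "x \<in> {\<Gamma>. max_consistent (KL {\<psi>}) \<Gamma> \<and> Delta \<subseteq> \<Gamma>}"
  then show "hh x \<in> fst X" using hh_X by blast
next
  fix a x y assume "x \<in> {\<Gamma>. max_consistent (KL {\<psi>}) \<Gamma> \<and> Delta \<subseteq> \<Gamma>}"
    "y \<in> {\<Gamma>. max_consistent (KL {\<psi>}) \<Gamma> \<and> Delta \<subseteq> \<Gamma>}" "\<forall>\<phi>. Box a \<phi> \<in> x \<longrightarrow> \<phi> \<in> y"
  then show "snd X a (hh x) (hh y)" using hh_fw unfolding inverse_limit_def by auto
next
  fix a x v assume "x \<in> {\<Gamma>. max_consistent (KL {\<psi>}) \<Gamma> \<and> Delta \<subseteq> \<Gamma>}" "v \<in> fst X" "snd X a (hh x) v"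
  then show "\<exists>u\<in>{\<Gamma>. max_consistent (KL {\<psi>}) \<Gamma> \<and> Delta \<subseteq> \<Gamma>}. (\<forall>\<phi>. Box a \<phi> \<in> x \<longrightarrow> \<phi> \<in> u) \<and> hh u = v"
    using hh_bk[of "{\<psi>}" x v a] unfolding inverse_limit_def by auto
next
  fix y assume y: "y \<in> fst X"
  obtain \<Gamma> where G: "Delta \<union> range (\<lambda>i. q i (y i)) \<subseteq> \<Gamma>" "max_consistent (KL {\<psi>}) \<Gamma>"
    using lindenbaum[OF surj_cons[OF val y]] by blast
  have "hh \<Gamma> = y"
  proof
    fix i show "hh \<Gamma> i = y i" using hh_eq[OF G(2) _ X_in[OF y]] G(1) by blast
  qed
  then show "\<exists>x\<in>{\<Gamma>. max_consistent (KL {\<psi>}) \<Gamma> \<and> Delta \<subseteq> \<Gamma>}. hh x = y" using G by blast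
qed

end



lemma chainK:
  fixes \<gamma> :: "nat \<Rightarrow> 'm fm"
  assumes A: "\<And>i1 i2. i2 < i1 \<Longrightarrow> \<gamma> i2 \<in> KL {\<gamma> i1}"
  shows "j \<le> k \<Longrightarrow> \<phi> \<in> KL {\<gamma> j} \<Longrightarrow> \<phi> \<in> KL {\<gamma> k}"
proof -
  assume jk: "j \<le> k" and p: "\<phi> \<in> KL {\<gamma> j}"
  have "\<gamma> j \<in> KL {\<gamma> k}"
  proof (cases "j = k")
    case True then show ?thesis by (auto intro: KL.hyp)
  next
    case False then have "j < k" using jk by simp
    then show ?thesis by (rule A)
  qed
  then have "{\<gamma> j} \<subseteq> KL {\<gamma> k}" by simp
  then show ?thesis using p by (rule KL_mono)
qed

lemma fin_range:
  fixes \<gamma> :: "nat \<Rightarrow> 'm fm"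
  assumes A: "\<And>i1 i2. i2 < i1 \<Longrightarrow> \<gamma> i2 \<in> KL {\<gamma> i1}"
  shows "finite B \<Longrightarrow> B \<subseteq> range \<gamma> \<Longrightarrow> \<exists>m. \<forall>m'\<ge>m. B \<subseteq> KL {\<gamma> m'}"
proof (induction B rule: finite_induct)
  case empty then show ?case by simp
next
  case (insert x B)
  have "B \<subseteq> range \<gamma>" "x \<in> range \<gamma>" using insert.prems by simp_all
  obtain m where m: "\<forall>m'\<ge>m. B \<subseteq> KL {\<gamma> m'}" using insert.IH[OF \<open>B \<subseteq> range \<gamma>\<close>] by blast
  obtain j where j: "x = \<gamma> j" using \<open>x \<in> range \<gamma>\<close> by blast
  have "\<forall>m'\<ge>max m j. insert x B \<subseteq> KL {\<gamma> m'}"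
  proof (intro allI impI)
    fix m' :: nat assume "max m j \<le> m'"
    then have mm: "m \<le> m'" "j \<le> m'" by auto
    have xj: "x \<in> KL {\<gamma> j}" unfolding j by (rule KL.hyp) simp
    have "x \<in> KL {\<gamma> m'}" by (rule chainK[of \<gamma> j m', OF _ mm(2) xj]) (rule A)
    moreover have "B \<subseteq> KL {\<gamma> m'}" using m mm(1) by blast
    ultimately show "insert x B \<subseteq> KL {\<gamma> m'}" by blast
  qed
  then show ?case by blast
qed

lemma bound:
  fixes \<gamma> :: "nat \<Rightarrow> 'm fm"
  assumes A: "\<And>i1 i2. i2 < i1 \<Longrightarrow> \<gamma> i2 \<in> KL {\<gamma> i1}"
  shows "finite B \<Longrightarrow> B \<subseteq> KL (range \<gamma>) \<Longrightarrow> \<exists>m. \<forall>m'\<ge>m. B \<subseteq> KL {\<gamma> m'}"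
proof (induction B rule: finite_induct)
  case empty then show ?case by simp
next
  case (insert x B)
  have "B \<subseteq> KL (range \<gamma>)" "x \<in> KL (range \<gamma>)" using insert.prems by simp_all
  obtain m where m: "\<forall>m'\<ge>m. B \<subseteq> KL {\<gamma> m'}" using insert.IH[OF \<open>B \<subseteq> KL (range \<gamma>)\<close>] by blast
  obtain A' where A': "finite A'" "A' \<subseteq> range \<gamma>" "x \<in> KL A'" using KL_compact[OF \<open>x \<in> KL (range \<gamma>)\<close>] by blast
  obtain j where j: "\<forall>m'\<ge>j. A' \<subseteq> KL {\<gamma> m'}" using fin_range[OF A A'(1,2)] by blast
  have "\<forall>m'\<ge>max m j. insert x B \<subseteq> KL {\<gamma> m'}"
  proof (intro allI impI)
    fix m' :: nat assume "max m j \<le> m'"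
    then have mm: "m \<le> m'" "j \<le> m'" by auto
    have "A' \<subseteq> KL {\<gamma> m'}" using j mm(2) by blast
    then have "x \<in> KL {\<gamma> m'}" using A'(3) by (rule KL_mono)
    moreover have "B \<subseteq> KL {\<gamma> m'}" using m mm(1) by blast
    ultimately show "insert x B \<subseteq> KL {\<gamma> m'}" by blast
  qed
  then show ?case by blast
qed

theorem lemmal16:
  fixes \<gamma> :: "nat \<Rightarrow> 'm fm"
  assumes "\<And>i1 i2. i2 < i1 \<Longrightarrow> \<gamma> i2 \<in> KL {\<gamma> i1}"
    and "\<forall>l. \<exists>n. \<forall>k. \<exists>(F :: nat \<Rightarrow> (nat, 'm) frame) f.
           inverse_system F f \<and> (\<forall>i. finite_frame (F i)) \<and>
           (\<forall>i. valid (F i) (\<gamma> k)) \<and>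
           valid (inverse_limit F f) (\<gamma> l) \<and>
           \<not> valid (inverse_limit F f) (\<gamma> n)"
  shows "\<forall>\<Sigma>. KL \<Sigma> = KL (range \<gamma>) \<longrightarrow> infinite {\<phi> \<in> \<Sigma>. \<not> canonical \<phi>}"
proof (intro allI impI notI)
  fix \<Sigma> assume eq: "KL \<Sigma> = KL (range \<gamma>)" and fNC: "finite {\<phi> \<in> \<Sigma>. \<not> canonical \<phi>}"
  have sub: "\<Sigma> \<subseteq> KL (range \<gamma>)" using eq KL.hyp by blast
  have NCsub: "{\<phi> \<in> \<Sigma>. \<not> canonical \<phi>} \<subseteq> KL (range \<gamma>)" using sub by blast
  have "\<exists>m. \<forall>m'\<ge>m. {\<phi> \<in> \<Sigma>. \<not> canonical \<phi>} \<subseteq> KL {\<gamma> m'}"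
    by (rule bound[of \<gamma>, OF _ fNC NCsub]) (rule assms(1))
  then obtain l where "\<forall>m'\<ge>l. {\<phi> \<in> \<Sigma>. \<not> canonical \<phi>} \<subseteq> KL {\<gamma> m'}" by blast
  then have l: "{\<phi> \<in> \<Sigma>. \<not> canonical \<phi>} \<subseteq> KL {\<gamma> l}" by blast
  obtain n where n: "\<forall>k. \<exists>(F :: nat \<Rightarrow> (nat, 'm) frame) f.
           inverse_system F f \<and> (\<forall>i. finite_frame (F i)) \<and>
           (\<forall>i. valid (F i) (\<gamma> k)) \<and>
           valid (inverse_limit F f) (\<gamma> l) \<and>
           \<not> valid (inverse_limit F f) (\<gamma> n)" using assms(2) by blast
  have "\<gamma> n \<in> KL \<Sigma>" using eq KL.hyp[of "\<gamma> n" "range \<gamma>"] by simp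
  then obtain S where S: "finite S" "S \<subseteq> \<Sigma>" "\<gamma> n \<in> KL S" using KL_compact by blast
  have Ssub: "S \<subseteq> KL (range \<gamma>)" using S(2) sub by blast
  have "\<exists>m. \<forall>m'\<ge>m. S \<subseteq> KL {\<gamma> m'}"
    by (rule bound[of \<gamma>, OF _ S(1) Ssub]) (rule assms(1))
  then obtain k where "\<forall>m'\<ge>k. S \<subseteq> KL {\<gamma> m'}" by blast
  then have k: "S \<subseteq> KL {\<gamma> k}" by blast
  obtain F :: "nat \<Rightarrow> (nat, 'm) frame" and f where Ff:
    "inverse_system F f" "\<forall>i. finite_frame (F i)" "\<forall>i. valid (F i) (\<gamma> k)"
    "valid (inverse_limit F f) (\<gamma> l)" "\<not> valid (inverse_limit F f) (\<gamma> n)"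
    using n by blast
  have "valid (inverse_limit F f) \<sigma>" if s: "\<sigma> \<in> S" for \<sigma>
  proof (cases "canonical \<sigma>")
    case True
    have sk: "\<sigma> \<in> KL {\<gamma> k}" using k s by blast
    have "\<forall>i. valid (F i) \<sigma>"
    proof
      fix i show "valid (F i) \<sigma>" by (rule soundness[OF _ sk]) (use Ff(3) in simp)
    qed
    then show ?thesis using key[OF Ff(1,2) _ True] by blast
  next
    case False
    then have "\<sigma> \<in> KL {\<gamma> l}" using l s S(2) by blast
    then show ?thesis by (rule soundness[rotated]) (use Ff(4) in simp)
  qed
  then have "valid (inverse_limit F f) (\<gamma> n)" by (rule soundness[OF _ S(3)])
  then show False using Ff(5) by blast
qed


end
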